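(* Let $\psi=\Gamma'/\Gamma$ be the digamma function. For all $z>0$, $\frac1{2z}<\psi\big(z+\tfrac12\big)-\psi(z)<\ln\big(1+\tfrac1{2z}\big)+\frac1z-\frac2{2z+1}$. *)

theory Defs
  imports "HOL-Analysis.Analysis"
begin

end

theory Submission
  imports Defs "HOL-Real_Asymp.Real_Asymp"
begin

lemma ln_ge_aux: "(x::real) > 0 \<Longrightarrow> ln x \<ge> 1 - 1/x"
proof -
  assume x: "x > 0"
  have "ln (1/x) \<le> 1/x - 1" using x by (intro ln_le_minus_one) simp
  thus ?thesis using x by (simp add: ln_div)
qed

theorem lemma3:
  fixes z :: real
  assumes "z > 0"
  shows "1 / (2 * z) < Digamma (z + 1/2) - Digamma z \<and>
         Digamma (z + 1/2) - Digamma z < ln (1 + 1 / (2 * z)) + 1 / z - 2 / (2 * z + 1)"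
proof -
  define D where "D = Digamma (z + 1/2) - Digamma z"
  define a where "a n = 1/(z + real n) - 1/(z + 1/2 + real n)" for n
  have s1: "(\<lambda>k. inverse (of_nat (Suc k)) - inverse (z + 1/2 + of_nat k)) sums (Digamma (z+1/2) + euler_mascheroni)"
    using summable_Digamma[of "z+1/2"] assms by (simp add: Digamma_def summable_sums)
  have s2: "(\<lambda>k. inverse (of_nat (Suc k)) - inverse (z + of_nat k)) sums (Digamma z + euler_mascheroni)"
    using summable_Digamma[of "z"] assms by (simp add: Digamma_def summable_sums)
  have sa: "a sums D"
  proof -
    have e: "(\<lambda>k. (inverse (of_nat (Suc k)) - inverse (z + 1/2 + of_nat k)) - (inverse (of_nat (Suc k)) - inverse (z + of_nat k))) = a"
      by (auto simp: a_def inverse_eq_divide add_ac)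
    show ?thesis using sums_diff[OF s1 s2] unfolding e D_def by simp
  qed
  define b where "b n = 1/(2*(z + real n)) - 1/(2*(z + real (Suc n)))" for n
  have lim0: "(\<lambda>n. 1/(2*(z + real n))) \<longlonglongrightarrow> 0"
    using assms by real_asymp
  have sb: "b sums (1/(2*z))"
    using telescope_sums'[OF lim0] unfolding b_def by simp
  have ab: "b n < a n" for n
  proof -
    have y: "z + real n > 0" using assms by simp
    define w where "w = z + real n"
    have w: "w > 0" using y by (simp add: w_def)
    have "b n = 1/(2*w) - 1/(2*(w+1))" by (simp add: b_def w_def add_ac)
    also have "\<dots> = (1/2)/(w*(w+1))" using w by (simp add: field_simps)
    also have "\<dots> < (1/2)/(w*(w+1/2))" using w by (intro divide_strict_left_mono mult_strict_left_mono) auto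
    also have "\<dots> = 1/w - 1/(w+1/2)" using w by (simp add: field_simps)
    also have "\<dots> = a n" by (simp add: a_def w_def add_ac)
    finally show ?thesis .
  qed
  have low: "1/(2*z) < D"
  proof -
    have "(\<lambda>n. a n - b n) sums (D - 1/(2*z))" using sums_diff[OF sa sb] .
    moreover have "0 < suminf (\<lambda>n. a n - b n)"
      using ab by (intro suminf_pos) (use calculation sums_summable in auto)
    ultimately show ?thesis by (simp add: sums_iff)
  qed
  define F where "F n = ln (z + real n + 1/2) - ln (z + real n)" for n
  have limF: "F \<longlonglongrightarrow> 0" unfolding F_def using assms by real_asymp
  have sF: "(\<lambda>n. F n - F (Suc n)) sums F 0"
    using telescope_sums'[OF limF] by simp
  have sa': "(\<lambda>n. a (Suc n)) sums (D - a 0)"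
    using sa by (simp add: sums_Suc_iff)
  have aF: "a (Suc n) < F n - F (Suc n)" for n
  proof -
    define y where "y = z + real n"
    have y: "y > 0" using assms by (simp add: y_def)
    define u where "u = (y+1/2)*(y+1)/(y*(y+3/2))"
    have u: "u > 0" using y by (simp add: u_def)
    have "F n - F (Suc n) = ln (y+1/2) - ln y - ln (y+3/2) + ln (y+1)"
      unfolding F_def y_def by (simp add: algebra_simps)
    also have "\<dots> = ln u"
      using y unfolding u_def by (simp add: ln_mult ln_div)
    finally have "F n - F (Suc n) = ln u" .
    moreover have "ln u \<ge> 1 - 1/u" using ln_ge_aux[OF u] .
    moreover have "a (Suc n) < 1 - 1/u"
    proof -
      have "a (Suc n) = 1/(y+1) - 1/(y+3/2)" unfolding a_def y_def by (simp add: algebra_simps)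
      also have "\<dots> = (1/2)/((y+1)*(y+3/2))" using y by (simp add: field_simps)
      also have "\<dots> < (1/2)/((y+1/2)*(y+1))" using y by (intro divide_strict_left_mono mult_strict_right_mono) (auto intro!: mult_pos_pos)
      also have "\<dots> = ((y+1/2)*(y+1) - y*(y+3/2))/((y+1/2)*(y+1))"
      proof -
        have num: "(y+1/2)*(y+1) - y*(y+3/2) = 1/2" by (simp add: algebra_simps)
        show ?thesis by (simp only: num)
      qed
      also have "\<dots> = 1 - y*(y+3/2)/((y+1/2)*(y+1))"
        using y by (subst diff_divide_distrib) simp
      also have "\<dots> = 1 - 1/u" unfolding u_def by simp
      finally show ?thesis .
    qed
    ultimately show ?thesis by linarith
  qed
  have up: "D - a 0 < F 0"
  proof -
    have "(\<lambda>n. (F n - F (Suc n)) - a (Suc n)) sums (F 0 - (D - a 0))" using sums_diff[OF sF sa'] .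
    moreover have "0 < suminf (\<lambda>n. (F n - F (Suc n)) - a (Suc n))"
      using aF by (intro suminf_pos) (use calculation sums_summable in auto)
    ultimately show ?thesis by (simp add: sums_iff)
  qed
  have "F 0 = ln (1 + 1/(2*z))" 
  proof -
    have "1 + 1/(2*z) = (z+1/2)/z" using assms by (simp add: field_simps)
    thus ?thesis unfolding F_def using assms by (simp add: ln_div)
  qed
  moreover have "a 0 = 1/z - 2/(2*z+1)" unfolding a_def using assms by (simp add: field_simps)
  ultimately show ?thesis using low up unfolding D_def by simp
qed

end
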